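(* Let $a>0$ and $b>0$, and equip $\mathrm{Diff}(S^1)$, $S^1=\mathbb{R}/\mathbb{Z}$, with the right-invariant Riemannian metric given at the identity by $$\langle\!\langle u,v\rangle\!\rangle_{H^1}=\int_0^1\big(a\,uv+b\,u_xv_x\big)\,dx$$ for vector fields $u,v$ on $S^1$ (identified with periodic functions). Then for all $u,v\in T_e\mathrm{Diff}(S^1)$, $$S(u,v):=\langle\!\langle R(u,v)v,u\rangle\!\rangle_{H^1}=\langle\!\langle \Gamma(u,v),\Gamma(u,v)\rangle\!\rangle_{H^1}-\langle\!\langle \Gamma(u,u),\Gamma(v,v)\rangle\!\rangle_{H^1},$$ where $$\Gamma(u,v)=A^{-1}\partial_x\Big(a\,uv+\tfrac{b}{2}u_xv_x\Big),\qquad A=a-b\,\partial_x^2 .$$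
   Context: $R$ denotes the Riemann curvature tensor of the Levi-Civita connection of the given right-invariant metric, evaluated at the identity $e$; $T_e\mathrm{Diff}(S^1)$ is the space of smooth vector fields on $S^1$. $S(u,v)$ is the non-normalized sectional curvature. *)

theory Defs
  imports "HOL-Analysis.Analysis"
begin

text \<open>Smooth vector fields on S^1 = R/Z, identified with smooth 1-periodic
  real functions: this is T_e Diff(S^1).\<close>
definition smooth_periodic :: "(real \<Rightarrow> real) \<Rightarrow> bool" where
  "smooth_periodic f \<longleftrightarrow> (\<forall>x. f (x + 1) = f x) \<and>
     (\<forall>n x. ((deriv ^^ n) f) differentiable (at x))"

definition VF :: "(real \<Rightarrow> real) set" where
  "VF = {f. smooth_periodic f}"

definition ipH1 :: "real \<Rightarrow> real \<Rightarrow> (real \<Rightarrow> real) \<Rightarrow> (real \<Rightarrow> real) \<Rightarrow> real" where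
  "ipH1 a b u v = integral {0..1} (\<lambda>x. a * u x * v x + b * deriv u x * deriv v x)"

text \<open>Bracket of the right-invariant vector fields generated by u and v:
  [X_u, X_v] = X_(brk u v), with brk u v = u v_x - u_x v.\<close>
definition brk :: "(real \<Rightarrow> real) \<Rightarrow> (real \<Rightarrow> real) \<Rightarrow> real \<Rightarrow> real" where
  "brk u v = (\<lambda>x. u x * deriv v x - deriv u x * v x)"

definition coad :: "real \<Rightarrow> real \<Rightarrow> (real \<Rightarrow> real) \<Rightarrow> (real \<Rightarrow> real) \<Rightarrow> real \<Rightarrow> real" where
  "coad a b u v = (THE w. w \<in> VF \<and> (\<forall>z\<in>VF. ipH1 a b w z = ipH1 a b v (brk u z)))"

text \<open>Levi-Civita connection of the right-invariant metric on right-invariant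
  vector fields (Koszul formula), evaluated at the identity.\<close>
definition conn :: "real \<Rightarrow> real \<Rightarrow> (real \<Rightarrow> real) \<Rightarrow> (real \<Rightarrow> real) \<Rightarrow> real \<Rightarrow> real" where
  "conn a b u v = (\<lambda>x. (brk u v x - coad a b u v x - coad a b v u x) / 2)"

definition curv :: "real \<Rightarrow> real \<Rightarrow> (real \<Rightarrow> real) \<Rightarrow> (real \<Rightarrow> real) \<Rightarrow> (real \<Rightarrow> real) \<Rightarrow> real \<Rightarrow> real" where
  "curv a b u v w = (\<lambda>x. conn a b u (conn a b v w) x - conn a b v (conn a b u w) x
                          - conn a b (brk u v) w x)"

definition Ainv :: "real \<Rightarrow> real \<Rightarrow> (real \<Rightarrow> real) \<Rightarrow> real \<Rightarrow> real" where
  "Ainv a b f = (THE g. g \<in> VF \<and> (\<forall>x. a * g x - b * deriv (deriv g) x = f x))"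

definition Gam :: "real \<Rightarrow> real \<Rightarrow> (real \<Rightarrow> real) \<Rightarrow> (real \<Rightarrow> real) \<Rightarrow> real \<Rightarrow> real" where
  "Gam a b u v = Ainv a b (deriv (\<lambda>x. a * u x * v x + b / 2 * deriv u x * deriv v x))"

end

theory Submission
  imports Defs
begin


definition smn :: "nat \<Rightarrow> (real \<Rightarrow> real) \<Rightarrow> bool" where
  "smn n f \<longleftrightarrow> (\<forall>m\<le>n. \<forall>x. (deriv ^^ m) f differentiable (at x))"

definition sm :: "(real \<Rightarrow> real) \<Rightarrow> bool" where
  "sm f \<longleftrightarrow> (\<forall>n x. (deriv ^^ n) f differentiable (at x))"

lemma sm_smn: "sm f \<longleftrightarrow> (\<forall>n. smn n f)"
  unfolding sm_def smn_def by auto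

lemma smn_0: "smn 0 f \<longleftrightarrow> (\<forall>x. f differentiable (at x))"
  unfolding smn_def by auto

lemma funpow_Suc_deriv: "(deriv ^^ Suc m) f = (deriv ^^ m) (deriv f)"
  by (simp only: funpow_Suc_right o_apply)

lemma smn_Suc: "smn (Suc n) f \<longleftrightarrow> (\<forall>x. f differentiable (at x)) \<and> smn n (deriv f)"
proof
  assume H: "smn (Suc n) f"
  have "\<forall>x. (deriv ^^ 0) f differentiable (at x)" using H le0 unfolding smn_def by blast
  then have "\<forall>x. f differentiable (at x)" by simp
  moreover have "smn n (deriv f)" unfolding smn_def
  proof (intro allI impI)
    fix m x assume "m \<le> n"
    then have "Suc m \<le> Suc n" by simp
    then have "(deriv ^^ Suc m) f differentiable (at x)" using H unfolding smn_def by blast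
    then show "(deriv ^^ m) (deriv f) differentiable (at x)" by (simp only: funpow_Suc_deriv)
  qed
  ultimately show "(\<forall>x. f differentiable (at x)) \<and> smn n (deriv f)" by blast
next
  assume H: "(\<forall>x. f differentiable (at x)) \<and> smn n (deriv f)"
  show "smn (Suc n) f" unfolding smn_def
  proof (intro allI impI)
    fix m x assume m: "m \<le> Suc n"
    show "(deriv ^^ m) f differentiable (at x)"
    proof (cases m)
      case 0 then show ?thesis using H by simp
    next
      case (Suc m')
      then have "m' \<le> n" using m by simp
      then have "(deriv ^^ m') (deriv f) differentiable (at x)" using H unfolding smn_def by blast
      then show ?thesis using Suc by (simp only: funpow_Suc_deriv)
    qed
  qed
qed

lemma smn_mono: "smn (Suc n) f \<Longrightarrow> smn n f"
  unfolding smn_def by auto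

lemma smn_diffble: "smn n f \<Longrightarrow> f differentiable (at x)"
proof -
  assume "smn n f"
  then have "(deriv ^^ 0) f differentiable (at x)" using le0 unfolding smn_def by blast
  then show ?thesis by simp
qed

lemma rd_fd: "(f::real\<Rightarrow>real) differentiable (at x) \<Longrightarrow> f field_differentiable (at x)"
  by (metis DERIV_deriv_iff_field_differentiable DERIV_deriv_iff_real_differentiable)

lemma deriv_add_fun:
  fixes f g :: "real \<Rightarrow> real"
  assumes "\<And>x. f differentiable (at x)" "\<And>x. g differentiable (at x)"
  shows "deriv (\<lambda>x. f x + g x) = (\<lambda>x. deriv f x + deriv g x)"
  apply (rule ext) apply (rule deriv_add) using rd_fd assms by auto

lemma deriv_diff_fun:
  fixes f g :: "real \<Rightarrow> real"
  assumes "\<And>x. f differentiable (at x)" "\<And>x. g differentiable (at x)"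
  shows "deriv (\<lambda>x. f x - g x) = (\<lambda>x. deriv f x - deriv g x)"
  apply (rule ext) apply (rule deriv_diff) using rd_fd assms by auto

lemma deriv_mult_fun:
  fixes f g :: "real \<Rightarrow> real"
  assumes "\<And>x. f differentiable (at x)" "\<And>x. g differentiable (at x)"
  shows "deriv (\<lambda>x. f x * g x) = (\<lambda>x. deriv f x * g x + f x * deriv g x)"
  apply (rule ext) apply (subst deriv_mult) using rd_fd assms by auto

lemma deriv_const_fun: "deriv (\<lambda>x. c::real) = (\<lambda>x. 0)"
  by (rule ext) simp

lemma smn_const: "smn n (\<lambda>x. c)"
proof (induction n arbitrary: c)
  case 0 then show ?case by (simp add: smn_0)
next
  case (Suc n) then show ?case by (simp add: smn_Suc deriv_const_fun)
qed

lemma smn_add: "smn n f \<Longrightarrow> smn n g \<Longrightarrow> smn n (\<lambda>x. f x + g x)"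
proof (induction n arbitrary: f g)
  case 0 then show ?case by (auto simp: smn_0)
next
  case (Suc n)
  then have df: "\<And>x. f differentiable (at x)" and dg: "\<And>x. g differentiable (at x)"
    and f': "smn n (deriv f)" and g': "smn n (deriv g)"
    by (auto simp: smn_Suc)
  have "smn n (\<lambda>x. deriv f x + deriv g x)" by (rule Suc.IH[OF f' g'])
  moreover have "\<And>x. (\<lambda>x. f x + g x) differentiable (at x)" using df dg by simp
  ultimately show ?case unfolding smn_Suc deriv_add_fun[OF df dg] by blast
qed

lemma smn_diff: "smn n f \<Longrightarrow> smn n g \<Longrightarrow> smn n (\<lambda>x. f x - g x)"
proof (induction n arbitrary: f g)
  case 0 then show ?case by (auto simp: smn_0)
next
  case (Suc n)
  then have df: "\<And>x. f differentiable (at x)" and dg: "\<And>x. g differentiable (at x)"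
    and f': "smn n (deriv f)" and g': "smn n (deriv g)"
    by (auto simp: smn_Suc)
  have "smn n (\<lambda>x. deriv f x - deriv g x)" by (rule Suc.IH[OF f' g'])
  moreover have "\<And>x. (\<lambda>x. f x - g x) differentiable (at x)" using df dg by simp
  ultimately show ?case unfolding smn_Suc deriv_diff_fun[OF df dg] by blast
qed

lemma smn_mult: "smn n f \<Longrightarrow> smn n g \<Longrightarrow> smn n (\<lambda>x. f x * g x)"
proof (induction n arbitrary: f g)
  case 0 then show ?case by (auto simp: smn_0)
next
  case (Suc n)
  then have df: "\<And>x. f differentiable (at x)" and dg: "\<And>x. g differentiable (at x)"
    and f': "smn n (deriv f)" and g': "smn n (deriv g)"
    by (auto simp: smn_Suc)
  have "smn n (\<lambda>x. deriv f x * g x)" by (rule Suc.IH[OF f' smn_mono[OF Suc.prems(2)]])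
  moreover have "smn n (\<lambda>x. f x * deriv g x)" by (rule Suc.IH[OF smn_mono[OF Suc.prems(1)] g'])
  ultimately have "smn n (\<lambda>x. deriv f x * g x + f x * deriv g x)" by (rule smn_add)
  moreover have "\<And>x. (\<lambda>x. f x * g x) differentiable (at x)" using df dg by simp
  ultimately show ?case unfolding smn_Suc deriv_mult_fun[OF df dg] by blast
qed

lemma sm_const[simp]: "sm (\<lambda>x. c)" by (simp add: sm_smn smn_const)
lemma sm_add[simp]: "sm f \<Longrightarrow> sm g \<Longrightarrow> sm (\<lambda>x. f x + g x)" by (simp add: sm_smn smn_add)
lemma sm_diff[simp]: "sm f \<Longrightarrow> sm g \<Longrightarrow> sm (\<lambda>x. f x - g x)" by (simp add: sm_smn smn_diff)
lemma sm_mult[simp]: "sm f \<Longrightarrow> sm g \<Longrightarrow> sm (\<lambda>x. f x * g x)" by (simp add: sm_smn smn_mult)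
lemma sm_cmult[simp]: "sm f \<Longrightarrow> sm (\<lambda>x. c * f x)" using sm_mult[of "\<lambda>x. c" f] by simp
lemma sm_divc[simp]: "sm f \<Longrightarrow> sm (\<lambda>x. f x / c)" using sm_mult[of f "\<lambda>x. 1/c"] by simp
lemma sm_deriv[simp]: "sm f \<Longrightarrow> sm (deriv f)" unfolding sm_smn using smn_Suc by blast
lemma sm_diffble[simp]: "sm f \<Longrightarrow> f differentiable (at x)" by (simp add: sm_smn smn_diffble)
lemma sm_minus[simp]: "sm f \<Longrightarrow> sm (\<lambda>x. - f x)" using sm_diff[of "\<lambda>x. 0" f] by simp
lemma sm_iff: "sm f \<longleftrightarrow> (\<forall>x. f differentiable (at x)) \<and> sm (deriv f)"
proof
  assume "sm f" then show "(\<forall>x. f differentiable (at x)) \<and> sm (deriv f)" using sm_deriv sm_diffble by blast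
next
  assume H: "(\<forall>x. f differentiable (at x)) \<and> sm (deriv f)"
  show "sm f" unfolding sm_smn
  proof
    fix n show "smn n f" using H by (cases n) (auto simp: smn_0 smn_Suc sm_smn)
  qed
qed

lemma sm_has_deriv: "sm f \<Longrightarrow> (f has_real_derivative deriv f x) (at x)"
  by (simp add: DERIV_deriv_iff_real_differentiable)
lemma sm_cont[simp]: "sm f \<Longrightarrow> continuous_on S f"
  by (meson continuous_at_imp_continuous_on differentiable_imp_continuous_within sm_diffble)
lemma sm_isCont[simp]: "sm f \<Longrightarrow> isCont f x"
  by (simp add: differentiable_imp_continuous_within)

lemma deriv_add_sm[simp]: "sm f \<Longrightarrow> sm g \<Longrightarrow> deriv (\<lambda>x. f x + g x) = (\<lambda>x. deriv f x + deriv g x)"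
  by (simp add: deriv_add_fun)
lemma deriv_diff_sm[simp]: "sm f \<Longrightarrow> sm g \<Longrightarrow> deriv (\<lambda>x. f x - g x) = (\<lambda>x. deriv f x - deriv g x)"
  by (simp add: deriv_diff_fun)
lemma deriv_mult_sm[simp]: "sm f \<Longrightarrow> sm g \<Longrightarrow> deriv (\<lambda>x. f x * g x) = (\<lambda>x. deriv f x * g x + f x * deriv g x)"
  by (simp add: deriv_mult_fun)
lemma deriv_cmult_sm[simp]: "sm f \<Longrightarrow> deriv (\<lambda>x. c * f x) = (\<lambda>x. c * deriv f x)"
  using deriv_mult_sm[of "\<lambda>x. c" f] by (simp add: deriv_const_fun)
lemma deriv_minus_sm[simp]: "sm f \<Longrightarrow> deriv (\<lambda>x. - f x) = (\<lambda>x. - deriv f x)"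
  using deriv_diff_sm[of "\<lambda>x. 0" f] by (simp add: deriv_const_fun)

definition per :: "(real \<Rightarrow> real) \<Rightarrow> bool" where "per f \<longleftrightarrow> (\<forall>x. f (x + 1) = f x)"

lemma per_deriv:
  assumes "per f" "\<And>x. f differentiable (at x)" shows "per (deriv f)"
  unfolding per_def
proof
  fix x
  have "((\<lambda>y. f (y + 1)) has_real_derivative deriv f (x + 1) * 1) (at x)"
    by (rule DERIV_chain2[where f=f]) (auto simp: assms DERIV_deriv_iff_real_differentiable intro!: derivative_eq_intros)
  moreover have "(\<lambda>y. f (y + 1)) = f" using assms(1) by (auto simp: per_def)
  ultimately have "(f has_real_derivative deriv f (x + 1)) (at x)" by simp
  then show "deriv f (x + 1) = deriv f x" by (simp add: DERIV_imp_deriv)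
qed

lemma VF_iff: "f \<in> VF \<longleftrightarrow> per f \<and> sm f"
  by (simp add: VF_def smooth_periodic_def per_def sm_def)




lemma per_nat: "per f \<Longrightarrow> f (x + real n) = f x"
  by (induction n arbitrary: x) (auto simp: per_def add.assoc[symmetric])

lemma per_int: assumes "per f" shows "f (x + real_of_int n) = f x"
proof (cases "n \<ge> 0")
  case True then show ?thesis using per_nat[OF assms, of x "nat n"] by simp
next
  case False
  then have "f (x + real_of_int n + real (nat (-n))) = f (x + real_of_int n)"
    using per_nat[OF assms] by blast
  then show ?thesis using False by simp
qed

lemma per_from_01:
  assumes "per f" "\<And>x. x \<in> {0..1} \<Longrightarrow> f x = 0" shows "f x = 0"
proof -
  have "f x = f (x - real_of_int \<lfloor>x\<rfloor>)" using per_int[OF assms(1), of "x - real_of_int \<lfloor>x\<rfloor>" "\<lfloor>x\<rfloor>"] by simp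
  also have "\<dots> = 0" by (rule assms(2)) (auto, linarith)
  finally show ?thesis .
qed

lemma int_zero:
  assumes "\<And>x. (F has_real_derivative f x) (at x)" "F 1 = F 0"
  shows "(f has_integral 0) {0..1}"
proof -
  have "(f has_integral (F 1 - F 0)) {0..1}"
    by (rule fundamental_theorem_of_calculus)
      (auto simp: has_real_derivative_iff_has_vector_derivative[symmetric] intro!: has_field_derivative_at_within assms(1))
  then show ?thesis using assms(2) by simp
qed

lemma per_sm_deriv[simp]: "per f \<Longrightarrow> sm f \<Longrightarrow> per (deriv f)"
  by (simp add: per_deriv)
lemma per_add[simp]: "per f \<Longrightarrow> per g \<Longrightarrow> per (\<lambda>x. f x + g x)" by (simp add: per_def)
lemma per_diff[simp]: "per f \<Longrightarrow> per g \<Longrightarrow> per (\<lambda>x. f x - g x)" by (simp add: per_def)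
lemma per_mult[simp]: "per f \<Longrightarrow> per g \<Longrightarrow> per (\<lambda>x. f x * g x)" by (simp add: per_def)
lemma per_const[simp]: "per (\<lambda>x. c)" by (simp add: per_def)
lemma per_cmult[simp]: "per f \<Longrightarrow> per (\<lambda>x. c * f x)" by (simp add: per_def)
lemma per_minus[simp]: "per f \<Longrightarrow> per (\<lambda>x. - f x)" by (simp add: per_def)
lemma per_divc[simp]: "per f \<Longrightarrow> per (\<lambda>x. f x / c)" by (simp add: per_def)

lemma per_deriv_01: "per f \<Longrightarrow> f 1 = f 0" unfolding per_def by (metis add_0)

lemma int_exact:
  assumes "sm F" "per F" "\<And>x. deriv F x = f x"
  shows "(f has_integral 0) {0..1}"
  using int_zero[of F f] assms sm_has_deriv[OF assms(1)] per_deriv_01[OF assms(2)] by metis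

lemma intble: "sm f \<Longrightarrow> f integrable_on {0..1}"
  by (simp add: integrable_continuous_real)

lemma antideriv:
  assumes "\<And>x. isCont f x" shows "\<exists>F. \<forall>x. (F has_real_derivative f x) (at x)"
  using einterval_antiderivative[of "-\<infinity>" "\<infinity>" f] assms
  by (auto simp: has_real_derivative_iff_has_vector_derivative)




lemma exists_Ainv_sol:
  assumes a: "a > 0" and b: "b > 0" and f: "sm f" "per f"
  shows "\<exists>g. sm g \<and> per g \<and> (\<forall>x. a * g x - b * deriv (deriv g) x = f x)"
proof -
  define k where "k = sqrt (a / b)"
  have k: "k > 0" using a b by (simp add: k_def)
  have bk: "b * k^2 = a" using a b by (simp add: k_def)
  define \<phi> where "\<phi> = (\<lambda>x. f x / (- b))"
  have smphi: "sm \<phi>" using f by (simp add: \<phi>_def)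
  have perphi: "per \<phi>" using f by (simp add: \<phi>_def)
  have cphi: "\<And>x. isCont \<phi> x" using smphi by simp
  obtain P1 where P1: "\<And>x. (P1 has_real_derivative exp (-(k*x)) * \<phi> x) (at x)"
    using antideriv[of "\<lambda>x. exp (-(k*x)) * \<phi> x"] cphi by (auto intro!: continuous_intros)
  obtain P2 where P2: "\<And>x. (P2 has_real_derivative exp (k*x) * \<phi> x) (at x)"
    using antideriv[of "\<lambda>x. exp (k*x) * \<phi> x"] cphi by (auto intro!: continuous_intros)
  have phi1: "\<phi> (x + 1) = \<phi> x" for x using perphi by (simp add: per_def)
  define c1 where "c1 = P1 1 - exp (-k) * P1 0"
  define c2 where "c2 = P2 1 - exp k * P2 0"
  have Q1: "P1 (x+1) - exp (-k) * P1 x = c1" for x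
  proof -
    have "\<forall>x. ((\<lambda>x. P1 (x+1) - exp (-k) * P1 x) has_real_derivative 0) (at x)"
    proof
      fix x
      have "((\<lambda>x. P1 (x+1)) has_real_derivative exp (-(k*(x+1))) * \<phi> (x+1) * 1) (at x)"
        by (rule DERIV_chain2[OF P1]) (auto intro!: derivative_eq_intros)
      then have "((\<lambda>x. P1 (x+1) - exp (-k) * P1 x) has_real_derivative
          exp (-(k*(x+1))) * \<phi> (x+1) * 1 - exp (-k) * (exp (-(k*x)) * \<phi> x)) (at x)"
        by (rule DERIV_diff[OF _ DERIV_cmult[OF P1]])
      moreover have "exp (-(k*(x+1))) * \<phi> (x+1) * 1 - exp (-k) * (exp (-(k*x)) * \<phi> x) = 0"
      proof -
        have e: "exp (-(k*(x+1))) = exp (-k) * exp (-(k*x))" by (simp add: mult_exp_exp algebra_simps)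
        show ?thesis unfolding e phi1 by simp
      qed
      ultimately show "((\<lambda>x. P1 (x+1) - exp (-k) * P1 x) has_real_derivative 0) (at x)" by simp
    qed
    from DERIV_isconst_all[OF this, of x 0] show ?thesis by (simp add: c1_def)
  qed
  have Q2: "P2 (x+1) - exp k * P2 x = c2" for x
  proof -
    have "\<forall>x. ((\<lambda>x. P2 (x+1) - exp k * P2 x) has_real_derivative 0) (at x)"
    proof
      fix x
      have "((\<lambda>x. P2 (x+1)) has_real_derivative exp (k*(x+1)) * \<phi> (x+1) * 1) (at x)"
        by (rule DERIV_chain2[OF P2]) (auto intro!: derivative_eq_intros)
      then have "((\<lambda>x. P2 (x+1) - exp k * P2 x) has_real_derivative
          exp (k*(x+1)) * \<phi> (x+1) * 1 - exp k * (exp (k*x) * \<phi> x)) (at x)"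
        by (rule DERIV_diff[OF _ DERIV_cmult[OF P2]])
      moreover have "exp (k*(x+1)) * \<phi> (x+1) * 1 - exp k * (exp (k*x) * \<phi> x) = 0"
      proof -
        have e: "exp (k*(x+1)) = exp k * exp (k*x)" by (simp add: mult_exp_exp algebra_simps)
        show ?thesis unfolding e phi1 by simp
      qed
      ultimately show "((\<lambda>x. P2 (x+1) - exp k * P2 x) has_real_derivative 0) (at x)" by simp
    qed
    from DERIV_isconst_all[OF this, of x 0] show ?thesis by (simp add: c2_def)
  qed
  have ek1: "exp (-k) \<noteq> 1" using k by simp
  have ek2: "exp k \<noteq> 1" using k by simp
  define \<alpha> where "\<alpha> = c1 / (2*k*(exp (-k) - 1))"
  define \<beta> where "\<beta> = c2 / (2*k*(1 - exp k))"
  define E1 where "E1 = (\<lambda>x. \<alpha> + P1 x / (2*k))"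
  define E2 where "E2 = (\<lambda>x. \<beta> - P2 x / (2*k))"
  have dE1: "(E1 has_real_derivative exp (-(k*x)) * \<phi> x / (2*k)) (at x)" for x
    unfolding E1_def using k by (auto intro!: derivative_eq_intros P1)
  have dE2: "(E2 has_real_derivative - (exp (k*x) * \<phi> x / (2*k))) (at x)" for x
    unfolding E2_def using k by (auto intro!: derivative_eq_intros P2)
  have E1p: "E1 (x+1) = exp (-k) * E1 x" for x
  proof -
    have "E1 (x+1) = \<alpha> + (c1 + exp (-k) * P1 x) / (2*k)"
      using Q1[of x] by (simp add: E1_def algebra_simps)
    also have "\<dots> = exp (-k) * E1 x"
      using k ek1 by (simp add: E1_def \<alpha>_def field_simps)
    finally show ?thesis .
  qed
  have E2p: "E2 (x+1) = exp k * E2 x" for x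
  proof -
    have "E2 (x+1) = \<beta> - (c2 + exp k * P2 x) / (2*k)"
      using Q2[of x] by (simp add: E2_def algebra_simps)
    also have "\<dots> = exp k * E2 x"
      using k ek2 by (simp add: E2_def \<beta>_def field_simps)
    finally show ?thesis .
  qed
  define g where "g = (\<lambda>x. exp (k*x) * E1 x + exp (-(k*x)) * E2 x)"
  define g1 where "g1 = (\<lambda>x. k * exp (k*x) * E1 x - k * exp (-(k*x)) * E2 x)"
  have dg: "(g has_real_derivative g1 x) (at x)" for x
    unfolding g_def g1_def by (auto intro!: derivative_eq_intros dE1 dE2 simp: algebra_simps)
  have ee: "exp (k*x) * exp (-(k*x)) = 1" for x by (simp add: exp_minus)
  have dg1: "(g1 has_real_derivative k^2 * g x + \<phi> x) (at x)" for x
    unfolding g1_def using k by (auto intro!: derivative_eq_intros dE1 dE2 simp: g_def exp_minus field_simps power2_eq_square)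
  have deriv_g: "deriv g = g1" by (rule ext, rule DERIV_imp_deriv, rule dg)
  have deriv_g1: "deriv g1 = (\<lambda>x. k^2 * g x + \<phi> x)" by (rule ext, rule DERIV_imp_deriv, rule dg1)
  have gd: "g differentiable (at x)" for x using dg real_differentiable_def by blast
  have g1d: "g1 differentiable (at x)" for x using dg1 real_differentiable_def by blast
  have smphin: "smn n \<phi>" for n using smphi by (simp add: sm_smn)
  have "smn n g \<and> smn n g1" for n
  proof (induction n)
    case 0 then show ?case by (simp add: smn_0 gd g1d)
  next
    case (Suc n)
    then have "smn n (\<lambda>x. k^2 * g x + \<phi> x)"
      by (intro smn_add smn_mult smn_const smphin) auto
    then show ?case using Suc by (simp add: smn_Suc gd g1d deriv_g deriv_g1)
  qed
  then have smg: "sm g" by (simp add: sm_smn)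
  have perg: "per g"
    unfolding per_def
  proof
    fix x
    have "exp (k*(x+1)) * exp (-k) = exp (k*x)"
      by (simp add: mult_exp_exp distrib_left)
    moreover have "exp (-(k*(x+1))) * exp k = exp (-(k*x))"
      by (simp add: mult_exp_exp distrib_left)
    ultimately show "g (x+1) = g x"
      by (simp add: g_def E1p E2p mult.assoc[symmetric])
  qed
  have eq: "a * g x - b * deriv (deriv g) x = f x" for x
    using b bk by (simp add: deriv_g deriv_g1 \<phi>_def field_simps)
  show ?thesis using smg perg eq by blast
qed




lemma has_integral_eqf: "(f has_integral I) S \<Longrightarrow> (\<And>x. f x = g x) \<Longrightarrow> (g has_integral I) S"
proof -
  assume "(f has_integral I) S" "\<And>x. f x = g x"
  moreover have "f = g" using \<open>\<And>x. f x = g x\<close> by (rule ext)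
  ultimately show ?thesis by simp
qed

lemma hint: "sm f \<Longrightarrow> (f has_integral integral {0..1} f) {0..1}"
  by (rule integrable_integral) (rule intble)

lemma ipH1_IBP:
  assumes "sm g" "per g" "sm z" "per z"
  shows "ipH1 a b g z = integral {0..1} (\<lambda>x. (a * g x - b * deriv (deriv g) x) * z x)"
proof -
  have h0: "((\<lambda>x. b * deriv (deriv g) x * z x + b * deriv g x * deriv z x) has_integral 0) {0..1}"
    by (rule int_exact[of "\<lambda>x. b * deriv g x * z x"]) (use assms in \<open>auto simp: algebra_simps\<close>)
  have "((\<lambda>x. (a * g x - b * deriv (deriv g) x) * z x + (b * deriv (deriv g) x * z x + b * deriv g x * deriv z x))
     has_integral (integral {0..1} (\<lambda>x. (a * g x - b * deriv (deriv g) x) * z x) + 0)) {0..1}"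
    by (rule has_integral_add[OF _ h0], rule hint) (use assms in simp)
  then have "((\<lambda>x. (a * g x - b * deriv (deriv g) x) * z x + (b * deriv (deriv g) x * z x + b * deriv g x * deriv z x))
     has_integral (integral {0..1} (\<lambda>x. (a * g x - b * deriv (deriv g) x) * z x))) {0..1}" by simp
  then have "((\<lambda>x. a * g x * z x + b * deriv g x * deriv z x)
     has_integral (integral {0..1} (\<lambda>x. (a * g x - b * deriv (deriv g) x) * z x))) {0..1}"
    by (rule has_integral_eqf) (simp add: algebra_simps)
  then show ?thesis unfolding ipH1_def by (rule integral_unique)
qed

lemma ipH1_zero:
  assumes a: "a > 0" and b: "b > 0" and d: "sm d" "per d" and z: "ipH1 a b d d = 0"
  shows "d x = 0"
proof -
  let ?h = "\<lambda>x. a * d x * d x + b * deriv d x * deriv d x"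
  have c: "continuous_on {0..1} ?h" using d by (intro sm_cont) simp
  have p1: "a * d x * d x \<ge> 0" for x using a by (simp add: mult.assoc)
  have p2: "b * deriv d x * deriv d x \<ge> 0" for x using b by (simp add: mult.assoc)
  have nn: "\<And>x. x \<in> {0..1} \<Longrightarrow> ?h x \<ge> 0" using p1 p2 by (simp add: add_nonneg_nonneg)
  have "\<forall>x\<in>{0..1}. ?h x = 0" using integral_eq_0_iff[OF c _ nn] z by (simp add: ipH1_def)
  then have "\<And>x. x \<in> {0..1} \<Longrightarrow> a * d x * d x = 0" using p1 p2
    by (metis add_nonneg_eq_0_iff)
  then have "\<And>x. x \<in> {0..1} \<Longrightarrow> d x = 0" using a by simp
  then show ?thesis by (rule per_from_01[OF d(2)])
qed

lemma Ainv_prop: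
  assumes a: "a > 0" and b: "b > 0" and f: "sm f" "per f"
  shows "sm (Ainv a b f) \<and> per (Ainv a b f) \<and> (\<forall>x. a * Ainv a b f x - b * deriv (deriv (Ainv a b f)) x = f x)"
proof -
  obtain g where g: "sm g" "per g" "\<forall>x. a * g x - b * deriv (deriv g) x = f x"
    using exists_Ainv_sol[OF a b f] by blast
  have uniq: "h = g" if h: "h \<in> VF" "\<forall>x. a * h x - b * deriv (deriv h) x = f x" for h
  proof -
    define d where "d = (\<lambda>x. h x - g x)"
    have hh: "sm h" "per h" using h by (auto simp: VF_iff)
    have sd: "sm d" "per d" using hh g by (auto simp: d_def)
    have "ipH1 a b d d = integral {0..1} (\<lambda>x. (a * d x - b * deriv (deriv d) x) * d x)"
      by (rule ipH1_IBP[OF sd sd])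
    also have "\<dots> = integral {0..1} (\<lambda>x. 0)"
    proof -
      have "a * d x - b * deriv (deriv d) x = (a * h x - b * deriv (deriv h) x) - (a * g x - b * deriv (deriv g) x)" for x
        using hh g by (simp add: d_def algebra_simps)
      then have "\<And>x. a * d x - b * deriv (deriv d) x = 0" using h(2) g(3) by simp
      then show ?thesis by simp
    qed
    finally have "ipH1 a b d d = 0" by simp
    then have "\<And>x. d x = 0" using ipH1_zero[OF a b sd] by blast
    then show "h = g" by (auto simp: d_def)
  qed
  have "g \<in> VF" using g by (simp add: VF_iff)
  have "Ainv a b f = g" unfolding Ainv_def
  proof (rule the_equality)
    show "g \<in> VF \<and> (\<forall>x. a * g x - b * deriv (deriv g) x = f x)" using \<open>g \<in> VF\<close> g(3) by blast
  next
    fix h assume "h \<in> VF \<and> (\<forall>x. a * h x - b * deriv (deriv h) x = f x)"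
    then show "h = g" using uniq by blast
  qed
  then show ?thesis using g by simp
qed

lemma ipH1_Ainv:
  assumes a: "a > 0" and b: "b > 0" and f: "sm f" "per f" and z: "sm z" "per z"
  shows "ipH1 a b (Ainv a b f) z = integral {0..1} (\<lambda>x. f x * z x)"
  using Ainv_prop[OF a b f] ipH1_IBP[of "Ainv a b f" z a b] z by simp




lemma deriv_divc_sm[simp]: "sm f \<Longrightarrow> deriv (\<lambda>x. f x / c) = (\<lambda>x. deriv f x / c)"
  using deriv_mult_sm[of f "\<lambda>x. 1/c"] by (simp add: deriv_const_fun)

lemma int_parts:
  assumes "sm F" "per F" "sm z" "per z"
  shows "integral {0..1} (\<lambda>x. deriv F x * z x) = - integral {0..1} (\<lambda>x. F x * deriv z x)"
proof -
  have h0: "((\<lambda>x. deriv F x * z x + F x * deriv z x) has_integral 0) {0..1}"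
    by (rule int_exact[of "\<lambda>x. F x * z x"]) (use assms in auto)
  have h1: "((\<lambda>x. F x * deriv z x) has_integral integral {0..1} (\<lambda>x. F x * deriv z x)) {0..1}"
    by (rule hint) (use assms in simp)
  have "((\<lambda>x. (deriv F x * z x + F x * deriv z x) - F x * deriv z x) has_integral
          (0 - integral {0..1} (\<lambda>x. F x * deriv z x))) {0..1}"
    by (rule has_integral_diff[OF h0 h1])
  then have "((\<lambda>x. deriv F x * z x) has_integral - integral {0..1} (\<lambda>x. F x * deriv z x)) {0..1}"
    by simp
  then show ?thesis by (rule integral_unique)
qed

lemma Gam_sm:
  assumes a: "a > 0" and b: "b > 0" and p: "sm p" "per p" and q: "sm q" "per q"
  shows "sm (Gam a b p q) \<and> per (Gam a b p q)"
proof -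
  define H where "H = (\<lambda>x. a * p x * q x + b / 2 * deriv p x * deriv q x)"
  have sH: "sm H" "per H" using p q by (simp_all add: H_def)
  have G: "Gam a b p q = Ainv a b (deriv H)" unfolding Gam_def H_def ..
  show ?thesis unfolding G using Ainv_prop[OF a b, of "deriv H"] sH by simp
qed

lemma Gam_ip:
  assumes a: "a > 0" and b: "b > 0" and p: "sm p" "per p" and q: "sm q" "per q"
    and z: "sm z" "per z"
  shows "ipH1 a b (Gam a b p q) z = - integral {0..1} (\<lambda>x. (a * p x * q x + b / 2 * deriv p x * deriv q x) * deriv z x)"
proof -
  define H where "H = (\<lambda>x. a * p x * q x + b / 2 * deriv p x * deriv q x)"
  have sH: "sm H" "per H" using p q by (simp_all add: H_def)
  have G: "Gam a b p q = Ainv a b (deriv H)" unfolding Gam_def H_def ..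
  have "ipH1 a b (Gam a b p q) z = integral {0..1} (\<lambda>x. deriv H x * z x)"
    unfolding G by (rule ipH1_Ainv[OF a b _ _ z]) (use sH in simp_all)
  also have "\<dots> = - integral {0..1} (\<lambda>x. H x * deriv z x)"
    by (rule int_parts[OF sH z])
  finally show ?thesis by (simp add: H_def)
qed

lemma ipH1_unique:
  assumes a: "a > 0" and b: "b > 0" and f: "sm f" "per f" and g: "sm g" "per g"
    and H: "\<And>z. sm z \<Longrightarrow> per z \<Longrightarrow> ipH1 a b f z = ipH1 a b g z"
  shows "f = g"
proof -
  define d where "d = (\<lambda>x. f x - g x)"
  have sd: "sm d" "per d" using f g by (simp_all add: d_def)
  have e: "ipH1 a b f d = ipH1 a b g d" by (rule H[OF sd])
  have "ipH1 a b d d = ipH1 a b f d - ipH1 a b g d"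
  proof -
    have "((\<lambda>x. (a * f x * d x + b * deriv f x * deriv d x) - (a * g x * d x + b * deriv g x * deriv d x))
       has_integral (ipH1 a b f d - ipH1 a b g d)) {0..1}"
      unfolding ipH1_def by (intro has_integral_diff hint) (use f g sd in simp_all)
    then have "((\<lambda>x. a * d x * d x + b * deriv d x * deriv d x)
       has_integral (ipH1 a b f d - ipH1 a b g d)) {0..1}"
      by (rule has_integral_eqf) (use f g in \<open>simp add: d_def algebra_simps\<close>)
    then show ?thesis unfolding ipH1_def[of a b d d] by (rule integral_unique)
  qed
  then have "ipH1 a b d d = 0" using e by simp
  then have "d x = 0" for x using ipH1_zero[OF a b sd] by blast
  then show ?thesis by (auto simp: d_def)
qed




lemma brk_sm: "sm u \<Longrightarrow> sm z \<Longrightarrow> sm (brk u z)" by (simp add: brk_def)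
lemma brk_per: "sm u \<Longrightarrow> per u \<Longrightarrow> sm z \<Longrightarrow> per z \<Longrightarrow> per (brk u z)" by (simp add: brk_def)

lemma coad_prop:
  assumes a: "a > 0" and b: "b > 0" and u: "sm u" "per u" and v: "sm v" "per v"
  shows "sm (coad a b u v) \<and> per (coad a b u v) \<and>
    (\<forall>z. sm z \<longrightarrow> per z \<longrightarrow> ipH1 a b (coad a b u v) z = ipH1 a b v (brk u z))"
proof -
  define Av where "Av = (\<lambda>x. a * v x - b * deriv (deriv v) x)"
  have sAv: "sm Av" "per Av" using v by (simp_all add: Av_def)
  define r where "r = (\<lambda>x. - (deriv u x * Av x + u x * deriv Av x) - deriv u x * Av x)"
  have sr: "sm r" "per r" using u sAv by (simp_all add: r_def)
  define w where "w = Ainv a b r"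
  have sw: "sm w" "per w" using Ainv_prop[OF a b sr] by (simp_all add: w_def)
  have key: "ipH1 a b w z = ipH1 a b v (brk u z)" if z: "sm z" "per z" for z
  proof -
    have sb: "sm (brk u z)" "per (brk u z)" using u z by (simp_all add: brk_def)
    have e1: "ipH1 a b w z = integral {0..1} (\<lambda>x. r x * z x)"
      unfolding w_def by (rule ipH1_Ainv[OF a b sr z])
    have e2: "ipH1 a b v (brk u z) = integral {0..1} (\<lambda>x. Av x * brk u z x)"
      unfolding Av_def by (rule ipH1_IBP[OF v sb])
    have c: "((\<lambda>x. r x * z x - Av x * brk u z x) has_integral
        (integral {0..1} (\<lambda>x. r x * z x) - integral {0..1} (\<lambda>x. Av x * brk u z x))) {0..1}"
      by (intro has_integral_diff hint) (use sr sAv sb z in simp_all)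
    have d: "((\<lambda>x. r x * z x - Av x * brk u z x) has_integral 0) {0..1}"
      by (rule int_exact[of "\<lambda>x. - (u x * Av x * z x)"])
        (use u sAv z in \<open>simp_all add: r_def brk_def algebra_simps\<close>)
    have "integral {0..1} (\<lambda>x. r x * z x) - integral {0..1} (\<lambda>x. Av x * brk u z x) = 0"
      using has_integral_unique[OF c d] .
    then show ?thesis using e1 e2 by simp
  qed
  have "coad a b u v = w" unfolding coad_def
  proof (rule the_equality)
    show "w \<in> VF \<and> (\<forall>z\<in>VF. ipH1 a b w z = ipH1 a b v (brk u z))"
      using sw key by (simp add: VF_iff)
  next
    fix w' assume H: "w' \<in> VF \<and> (\<forall>z\<in>VF. ipH1 a b w' z = ipH1 a b v (brk u z))"
    then have sw': "sm w'" "per w'" by (simp_all add: VF_iff)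
    show "w' = w"
      by (rule ipH1_unique[OF a b sw' sw]) (use H key in \<open>simp add: VF_iff\<close>)
  qed
  then show ?thesis using sw key by simp
qed




lemma ipH1_add:
  assumes "sm f" "sm g" "sm z"
  shows "ipH1 a b (\<lambda>x. f x + g x) z = ipH1 a b f z + ipH1 a b g z"
proof -
  have "((\<lambda>x. (a * f x * z x + b * deriv f x * deriv z x) + (a * g x * z x + b * deriv g x * deriv z x))
     has_integral (ipH1 a b f z + ipH1 a b g z)) {0..1}"
    unfolding ipH1_def by (intro has_integral_add hint) (use assms in simp_all)
  then have "((\<lambda>x. a * (f x + g x) * z x + b * deriv (\<lambda>x. f x + g x) x * deriv z x)
     has_integral (ipH1 a b f z + ipH1 a b g z)) {0..1}"
    by (rule has_integral_eqf) (use assms in \<open>simp add: algebra_simps\<close>)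
  then show ?thesis unfolding ipH1_def[of a b "\<lambda>x. f x + g x"] by (rule integral_unique)
qed

lemma ipH1_diff3:
  assumes "sm f" "sm g" "sm h" "sm z"
  shows "ipH1 a b (\<lambda>x. f x - g x - h x) z = ipH1 a b f z - ipH1 a b g z - ipH1 a b h z"
proof -
  have "((\<lambda>x. (a * f x * z x + b * deriv f x * deriv z x) - (a * g x * z x + b * deriv g x * deriv z x)
       - (a * h x * z x + b * deriv h x * deriv z x))
     has_integral (ipH1 a b f z - ipH1 a b g z - ipH1 a b h z)) {0..1}"
    unfolding ipH1_def by (intro has_integral_diff hint) (use assms in simp_all)
  then have "((\<lambda>x. a * (f x - g x - h x) * z x + b * deriv (\<lambda>x. f x - g x - h x) x * deriv z x)
     has_integral (ipH1 a b f z - ipH1 a b g z - ipH1 a b h z)) {0..1}"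
    by (rule has_integral_eqf) (use assms in \<open>simp add: algebra_simps\<close>)
  then show ?thesis unfolding ipH1_def[of a b "\<lambda>x. f x - g x - h x"] by (rule integral_unique)
qed

lemma ipH1_comb3:
  assumes "sm f" "sm g" "sm h" "sm z"
  shows "ipH1 a b (\<lambda>x. (f x - g x - h x) / 2) z = (ipH1 a b f z - ipH1 a b g z - ipH1 a b h z) / 2"
proof -
  have "((\<lambda>x. ((a * f x * z x + b * deriv f x * deriv z x) - (a * g x * z x + b * deriv g x * deriv z x)
       - (a * h x * z x + b * deriv h x * deriv z x)) / 2)
     has_integral (ipH1 a b f z - ipH1 a b g z - ipH1 a b h z) / 2) {0..1}"
    unfolding ipH1_def by (intro has_integral_divide has_integral_diff hint) (use assms in simp_all)
  then have "((\<lambda>x. a * ((f x - g x - h x) / 2) * z x + b * deriv (\<lambda>x. (f x - g x - h x) / 2) x * deriv z x)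
     has_integral (ipH1 a b f z - ipH1 a b g z - ipH1 a b h z) / 2) {0..1}"
    by (rule has_integral_eqf) (use assms in \<open>simp add: algebra_simps add_divide_distrib diff_divide_distrib\<close>)
  then show ?thesis unfolding ipH1_def[of a b "\<lambda>x. (f x - g x - h x) / 2"] by (rule integral_unique)
qed

lemma conn_eq:
  assumes a: "a > 0" and b: "b > 0" and u: "sm u" "per u" and v: "sm v" "per v"
  shows "conn a b u v = (\<lambda>x. u x * deriv v x + Gam a b u v x)"
proof -
  note C1 = coad_prop[OF a b u v] and C2 = coad_prop[OF a b v u]
  note G = Gam_sm[OF a b u v]
  have sc: "sm (conn a b u v)" "per (conn a b u v)"
    using C1 C2 u v by (simp_all add: conn_def brk_def)
  have sr: "sm (\<lambda>x. u x * deriv v x + Gam a b u v x)" "per (\<lambda>x. u x * deriv v x + Gam a b u v x)"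
    using G u v by simp_all
  show ?thesis
  proof (rule ipH1_unique[OF a b sc sr])
    fix z assume z: "sm z" "per z"
    have sb: "sm (brk u v)" "sm (brk u z)" "sm (brk v z)" using u v z by (simp_all add: brk_def)
    have L: "ipH1 a b (conn a b u v) z =
      (ipH1 a b (brk u v) z - ipH1 a b v (brk u z) - ipH1 a b u (brk v z)) / 2"
      unfolding conn_def using ipH1_comb3[of "brk u v" "coad a b u v" "coad a b v u" z a b] C1 C2 sb z by simp
    have R: "ipH1 a b (\<lambda>x. u x * deriv v x + Gam a b u v x) z =
      ipH1 a b (\<lambda>x. u x * deriv v x) z + - integral {0..1} (\<lambda>x. (a * u x * v x + b / 2 * deriv u x * deriv v x) * deriv z x)"
      using ipH1_add[of "\<lambda>x. u x * deriv v x" "Gam a b u v" z a b] Gam_ip[OF a b u v z] G u v z by simp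
    have c: "((\<lambda>x. ((a * brk u v x * z x + b * deriv (brk u v) x * deriv z x)
        - (a * v x * brk u z x + b * deriv v x * deriv (brk u z) x)
        - (a * u x * brk v z x + b * deriv u x * deriv (brk v z) x)) / 2
        - ((a * (u x * deriv v x) * z x + b * deriv (\<lambda>x. u x * deriv v x) x * deriv z x)
           + - ((a * u x * v x + b / 2 * deriv u x * deriv v x) * deriv z x)))
      has_integral ((ipH1 a b (brk u v) z - ipH1 a b v (brk u z) - ipH1 a b u (brk v z)) / 2 -
      (ipH1 a b (\<lambda>x. u x * deriv v x) z + - integral {0..1} (\<lambda>x. (a * u x * v x + b / 2 * deriv u x * deriv v x) * deriv z x)))) {0..1}"
      unfolding ipH1_def
      by (intro has_integral_diff has_integral_add has_integral_divide has_integral_neg hint) (use u v z sb in simp_all)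
    have d: "((\<lambda>x. ((a * brk u v x * z x + b * deriv (brk u v) x * deriv z x)
        - (a * v x * brk u z x + b * deriv v x * deriv (brk u z) x)
        - (a * u x * brk v z x + b * deriv u x * deriv (brk v z) x)) / 2
        - ((a * (u x * deriv v x) * z x + b * deriv (\<lambda>x. u x * deriv v x) x * deriv z x)
           + - ((a * u x * v x + b / 2 * deriv u x * deriv v x) * deriv z x)))
      has_integral 0) {0..1}"
      by (rule int_exact[of "\<lambda>x. - (b/2 * u x * deriv v x * deriv z x) - b/2 * deriv u x * v x * deriv z x
           + b/2 * deriv u x * deriv v x * z x"])
        (use u v z in \<open>simp_all add: brk_def algebra_simps add_divide_distrib diff_divide_distrib\<close>)
    have "(ipH1 a b (brk u v) z - ipH1 a b v (brk u z) - ipH1 a b u (brk v z)) / 2 -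
      (ipH1 a b (\<lambda>x. u x * deriv v x) z + - integral {0..1} (\<lambda>x. (a * u x * v x + b / 2 * deriv u x * deriv v x) * deriv z x)) = 0"
      by (rule has_integral_unique[OF c d])
    then show "ipH1 a b (conn a b u v) z = ipH1 a b (\<lambda>x. u x * deriv v x + Gam a b u v x) z"
      using L R by simp
  qed
qed




lemma Gam_ode:
  assumes a: "a > 0" and b: "b > 0" and p: "sm p" "per p" and q: "sm q" "per q"
  shows "deriv (deriv (Gam a b p q)) x = (a * Gam a b p q x - deriv (\<lambda>x. a * p x * q x + b / 2 * deriv p x * deriv q x) x) / b"
proof -
  define H where "H = (\<lambda>x. a * p x * q x + b / 2 * deriv p x * deriv q x)"
  have sH: "sm H" "per H" using p q by (simp_all add: H_def)
  have G: "Gam a b p q = Ainv a b (deriv H)" unfolding Gam_def H_def ..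
  have "a * Gam a b p q x - b * deriv (deriv (Gam a b p q)) x = deriv H x"
    unfolding G using Ainv_prop[OF a b, of "deriv H"] sH by simp
  then show ?thesis using b unfolding H_def[symmetric] by (simp add: field_simps)
qed

lemma main_identity:
  assumes a: "a > 0" and b: "b > 0" and u: "sm u" "per u" and v: "sm v" "per v"
  shows "ipH1 a b (curv a b u v v) u =
           ipH1 a b (Gam a b u v) (Gam a b u v) - ipH1 a b (Gam a b u u) (Gam a b v v)"
proof -
  define G1 where "G1 = Gam a b u u"
  define G2 where "G2 = Gam a b u v"
  define G3 where "G3 = Gam a b v v"
  have sG1: "sm G1" "per G1" using Gam_sm[OF a b u u] by (simp_all add: G1_def)
  have sG2: "sm G2" "per G2" using Gam_sm[OF a b u v] by (simp_all add: G2_def)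
  have sG3: "sm G3" "per G3" using Gam_sm[OF a b v v] by (simp_all add: G3_def)
  define X where "X = (\<lambda>x. v x * deriv v x + G3 x)"
  define Y where "Y = (\<lambda>x. u x * deriv v x + G2 x)"
  define W where "W = brk u v"
  have sX: "sm X" "per X" using v sG3 by (simp_all add: X_def)
  have sY: "sm Y" "per Y" using u v sG2 by (simp_all add: Y_def)
  have sW: "sm W" "per W" using u v by (simp_all add: W_def brk_def)
  have cX: "conn a b v v = X" unfolding X_def G3_def by (rule conn_eq[OF a b v v])
  have cY: "conn a b u v = Y" unfolding Y_def G2_def by (rule conn_eq[OF a b u v])
  have c1: "conn a b u X = (\<lambda>x. u x * deriv X x + Gam a b u X x)" by (rule conn_eq[OF a b u sX])
  have c2: "conn a b v Y = (\<lambda>x. v x * deriv Y x + Gam a b v Y x)" by (rule conn_eq[OF a b v sY])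
  have c3: "conn a b W v = (\<lambda>x. W x * deriv v x + Gam a b W v x)" by (rule conn_eq[OF a b sW v])
  have sGX: "sm (Gam a b u X)" using Gam_sm[OF a b u sX] by simp
  have sGY: "sm (Gam a b v Y)" using Gam_sm[OF a b v sY] by simp
  have sGW: "sm (Gam a b W v)" using Gam_sm[OF a b sW v] by simp
  have curv: "curv a b u v v = (\<lambda>x. conn a b u X x - conn a b v Y x - conn a b W v x)"
    unfolding curv_def cX cY W_def ..
  have S1: "ipH1 a b (curv a b u v v) u = ipH1 a b (conn a b u X) u - ipH1 a b (conn a b v Y) u - ipH1 a b (conn a b W v) u"
    unfolding curv by (rule ipH1_diff3) (use u v sX sY sW sGX sGY sGW in \<open>simp_all add: c1 c2 c3\<close>)
  have E1: "ipH1 a b (conn a b u X) u = ipH1 a b (\<lambda>x. u x * deriv X x) u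
      + - integral {0..1} (\<lambda>x. (a * u x * X x + b / 2 * deriv u x * deriv X x) * deriv u x)"
    unfolding c1 using ipH1_add[of "\<lambda>x. u x * deriv X x" "Gam a b u X" u a b] Gam_ip[OF a b u sX u] sGX u sX by simp
  have E2: "ipH1 a b (conn a b v Y) u = ipH1 a b (\<lambda>x. v x * deriv Y x) u
      + - integral {0..1} (\<lambda>x. (a * v x * Y x + b / 2 * deriv v x * deriv Y x) * deriv u x)"
    unfolding c2 using ipH1_add[of "\<lambda>x. v x * deriv Y x" "Gam a b v Y" u a b] Gam_ip[OF a b v sY u] sGY u v sY by simp
  have E3: "ipH1 a b (conn a b W v) u = ipH1 a b (\<lambda>x. W x * deriv v x) u
      + - integral {0..1} (\<lambda>x. (a * W x * v x + b / 2 * deriv W x * deriv v x) * deriv u x)"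
    unfolding c3 using ipH1_add[of "\<lambda>x. W x * deriv v x" "Gam a b W v" u a b] Gam_ip[OF a b sW v u] sGW u v sW by simp
  define Comb where "Comb = (\<lambda>x.
     ((a * (u x * deriv X x) * u x + b * deriv (\<lambda>x. u x * deriv X x) x * deriv u x)
       + - ((a * u x * X x + b / 2 * deriv u x * deriv X x) * deriv u x)
     - ((a * (v x * deriv Y x) * u x + b * deriv (\<lambda>x. v x * deriv Y x) x * deriv u x)
       + - ((a * v x * Y x + b / 2 * deriv v x * deriv Y x) * deriv u x))
     - ((a * (W x * deriv v x) * u x + b * deriv (\<lambda>x. W x * deriv v x) x * deriv u x)
       + - ((a * W x * v x + b / 2 * deriv W x * deriv v x) * deriv u x)))
     - ((a * G2 x * G2 x + b * deriv G2 x * deriv G2 x) - (a * G1 x * G3 x + b * deriv G1 x * deriv G3 x)))"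
  have c: "(Comb has_integral
     (((ipH1 a b (\<lambda>x. u x * deriv X x) u
      + - integral {0..1} (\<lambda>x. (a * u x * X x + b / 2 * deriv u x * deriv X x) * deriv u x))
     - (ipH1 a b (\<lambda>x. v x * deriv Y x) u
      + - integral {0..1} (\<lambda>x. (a * v x * Y x + b / 2 * deriv v x * deriv Y x) * deriv u x))
     - (ipH1 a b (\<lambda>x. W x * deriv v x) u
      + - integral {0..1} (\<lambda>x. (a * W x * v x + b / 2 * deriv W x * deriv v x) * deriv u x)))
     - (ipH1 a b G2 G2 - ipH1 a b G1 G3))) {0..1}"
    unfolding Comb_def ipH1_def
    by (intro has_integral_diff has_integral_add has_integral_neg hint)
      (use u v sX sY sW sG1 sG2 sG3 in simp_all)
  have ode1: "deriv (deriv G1) x = (a * G1 x - deriv (\<lambda>x. a * u x * u x + b / 2 * deriv u x * deriv u x) x) / b" for x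
    unfolding G1_def by (rule Gam_ode[OF a b u u])
  have ode2: "deriv (deriv G2) x = (a * G2 x - deriv (\<lambda>x. a * u x * v x + b / 2 * deriv u x * deriv v x) x) / b" for x
    unfolding G2_def by (rule Gam_ode[OF a b u v])
  have ode3: "deriv (deriv G3) x = (a * G3 x - deriv (\<lambda>x. a * v x * v x + b / 2 * deriv v x * deriv v x) x) / b" for x
    unfolding G3_def by (rule Gam_ode[OF a b v v])
  have d: "(Comb has_integral 0) {0..1}"
  proof (rule int_exact[of "\<lambda>x. - (a * G2 x * u x * v x) + a * G3 x * u x * u x + b * deriv G1 x * G3 x
       - b * G2 x * deriv G2 x - b / 2 * G2 x * deriv u x * deriv v x + b / 2 * G3 x * deriv u x * deriv u x"])
    show "sm (\<lambda>x. - (a * G2 x * u x * v x) + a * G3 x * u x * u x + b * deriv G1 x * G3 x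
       - b * G2 x * deriv G2 x - b / 2 * G2 x * deriv u x * deriv v x + b / 2 * G3 x * deriv u x * deriv u x)"
      using u v sG1 sG2 sG3 by simp
    show "per (\<lambda>x. - (a * G2 x * u x * v x) + a * G3 x * u x * u x + b * deriv G1 x * G3 x
       - b * G2 x * deriv G2 x - b / 2 * G2 x * deriv u x * deriv v x + b / 2 * G3 x * deriv u x * deriv u x)"
      using u v sG1 sG2 sG3 by simp
    fix x
    show "deriv (\<lambda>x. - (a * G2 x * u x * v x) + a * G3 x * u x * u x + b * deriv G1 x * G3 x
       - b * G2 x * deriv G2 x - b / 2 * G2 x * deriv u x * deriv v x + b / 2 * G3 x * deriv u x * deriv u x) x = Comb x"
      unfolding Comb_def X_def Y_def W_def brk_def
      using u v sG1 sG2 sG3 b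
      by (simp add: ode1 ode2 ode3 field_simps)
  qed
  have "((ipH1 a b (\<lambda>x. u x * deriv X x) u
      + - integral {0..1} (\<lambda>x. (a * u x * X x + b / 2 * deriv u x * deriv X x) * deriv u x))
     - (ipH1 a b (\<lambda>x. v x * deriv Y x) u
      + - integral {0..1} (\<lambda>x. (a * v x * Y x + b / 2 * deriv v x * deriv Y x) * deriv u x))
     - (ipH1 a b (\<lambda>x. W x * deriv v x) u
      + - integral {0..1} (\<lambda>x. (a * W x * v x + b / 2 * deriv W x * deriv v x) * deriv u x)))
     - (ipH1 a b G2 G2 - ipH1 a b G1 G3) = 0"
    by (rule has_integral_unique[OF c d])
  then show ?thesis unfolding S1 E1 E2 E3 G1_def[symmetric] G2_def[symmetric] G3_def[symmetric] by simp
qed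



theorem lemma6p1:
  fixes a b :: real and u v :: "real \<Rightarrow> real"
  assumes "a > 0" and "b > 0" and "u \<in> VF" and "v \<in> VF"
  shows "ipH1 a b (curv a b u v v) u =
           ipH1 a b (Gam a b u v) (Gam a b u v) - ipH1 a b (Gam a b u u) (Gam a b v v)"
  using main_identity[OF assms(1,2)] assms(3,4) by (simp add: VF_iff)

end
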